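(* Let $\beta\geq2$ be an integer, let $$u(z)=\frac{(1-|z|^2)^{2\beta-1}}{|1-z|^{2\beta}},\quad z\in\mathbb{D},$$ and define $$a=\sum_{k=0}^{2\beta-2}\sum_{j=0}^{k}(-1)^j\binom{2\beta-1}{j}\binom{k-j+\beta-1}{k-j}^2,\qquad b=-\sum_{k=1}^{2\beta-2}2k\sum_{j=0}^{k}(-1)^j\binom{2\beta-1}{j}\binom{k-j+\beta-1}{k-j}^2.$$ Then $$\frac{1}{2\pi}\int_0^{2\pi}u(re^{i\theta})\,d\theta=a+b(1-r)+O((1-r)^2)\quad\text{as }r\to1,$$ and these $a,b$ are the constants for which, for every $\varphi\in C^2(\mathbb{T})$, $\langle u_r,\varphi\rangle=a\varphi(1)+b(1-r)\varphi(1)+O((1-r)^2)$ as $r\to1$.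
   Context: $\mathbb{D}$ is the open unit disc and $\mathbb{T}$ the unit circle. For $0\le r<1$, $u_r(e^{i\theta})=u(re^{i\theta})$, and $\langle g,\varphi\rangle=\frac{1}{2\pi}\int_0^{2\pi}g(e^{i\theta})\varphi(e^{i\theta})\,d\theta$. *)

theory Defs
  imports "HOL-Analysis.Analysis" "HOL-Library.Landau_Symbols"
begin

definition u_kernel :: "nat \<Rightarrow> complex \<Rightarrow> real" where
  "u_kernel \<beta> z = (1 - (cmod z)^2) ^ (2*\<beta> - 1) / (cmod (1 - z)) ^ (2*\<beta>)"

definition dilate :: "(complex \<Rightarrow> 'a) \<Rightarrow> real \<Rightarrow> complex \<Rightarrow> 'a" where
  "dilate u r w = u (complex_of_real r * w)"

definition pairing :: "(complex \<Rightarrow> complex) \<Rightarrow> (complex \<Rightarrow> complex) \<Rightarrow> complex" where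
  "pairing g \<phi> = complex_of_real (1 / (2*pi)) * integral {0..2*pi} (\<lambda>t. g (cis t) * \<phi> (cis t))"

definition C2_circle :: "(complex \<Rightarrow> complex) \<Rightarrow> bool" where
  "C2_circle \<phi> \<longleftrightarrow> (\<exists>f1 f2. (\<forall>t. ((\<lambda>s. \<phi> (cis s)) has_vector_derivative f1 t) (at t)) \<and>
      (\<forall>t. (f1 has_vector_derivative f2 t) (at t)) \<and> continuous_on UNIV f2)"

definition const_a :: "nat \<Rightarrow> real" where
  "const_a \<beta> = (\<Sum>k=0..2*\<beta>-2. \<Sum>j=0..k.
      (-1)^j * real ((2*\<beta>-1) choose j) * real ((k - j + \<beta> - 1) choose (k - j))^2)"

definition const_b :: "nat \<Rightarrow> real" where
  "const_b \<beta> = - (\<Sum>k=1..2*\<beta>-2. 2 * real k * (\<Sum>j=0..k.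
      (-1)^j * real ((2*\<beta>-1) choose j) * real ((k - j + \<beta> - 1) choose (k - j))^2))"

end

theory Submission
  imports Defs "HOL-Computational_Algebra.Polynomial"
begin

lemma ser:
  fixes w :: complex assumes "norm w < 1" "n \<ge> 1"
  shows "(\<lambda>k. of_nat ((k + n - 1) choose k) * w^k) sums inverse ((1 - w)^n)"
proof -
  have "(\<lambda>k. (- 1) ^ k * (of_nat n + of_nat k - 1 gchoose k) * (-w)^k) sums (1 + (-w)) powr (- of_nat n)"
    by (rule one_plus_neg_powr_powser) (use assms in simp)
  moreover have "(- 1) ^ k * (of_nat n + of_nat k - 1 gchoose k) * (-w)^k = of_nat ((k + n - 1) choose k) * w^k" for k
  proof -
    have "(of_nat n + of_nat k - 1 :: complex) = of_nat (k + n - 1)" using assms(2) by (simp add: of_nat_diff)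
    then show ?thesis by (simp add: binomial_gbinomial power_minus' mult_ac)
  qed
  moreover have "(1 + (-w)) powr (- of_nat n) = inverse ((1 - w)^n)"
  proof -
    have "1 - w \<noteq> 0" using assms(1) by auto
    then show ?thesis by (simp add: powr_minus powr_nat')
  qed
  ultimately show ?thesis by simp
qed

lemma cis_int:
  fixes m :: int
  shows "((\<lambda>t. cis (of_int m * t)) has_integral (if m = 0 then 2*pi else 0)) {0..2*pi}"
proof (cases "m = 0")
  case True
  then show ?thesis using has_integral_const_real[of "1::complex" 0 "2*pi"] by (simp add: scaleR_conv_of_real)
next
  case False
  define c where "c = \<i> * of_int m"
  have c0: "c \<noteq> 0" using False by (simp add: c_def)
  have d: "((\<lambda>t. exp (of_real t * c) / c) has_vector_derivative cis (of_int m * t)) (at t within {0..2*pi})" for t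
  proof -
    have "((\<lambda>z. exp (z * c) / c) has_field_derivative (exp (of_real t * c) * c / c)) (at (of_real t))"
      by (auto intro!: derivative_eq_intros)
    then have "((\<lambda>t. exp (of_real t * c) / c) has_vector_derivative (exp (of_real t * c))) (at t)"
      using c0 by (auto dest: has_vector_derivative_real_field)
    moreover have "exp (of_real t * c) = cis (of_int m * t)"
      by (simp add: c_def cis_conv_exp mult_ac)
    ultimately show ?thesis by (auto intro: has_vector_derivative_at_within)
  qed
  have "((\<lambda>t. cis (of_int m * t)) has_integral (exp (of_real (2*pi) * c) / c - exp (of_real 0 * c) / c)) {0..2*pi}"
    by (rule fundamental_theorem_of_calculus) (use d in auto)
  moreover have "exp (of_real (2*pi) * c) = 1"
    by (simp add: c_def exp_eq_1 mult_ac) 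
  ultimately show ?thesis using False by simp
qed
lemma int_main:
  assumes r: "0 \<le> r" "r < 1" and n: "n \<ge> 1"
  shows "((\<lambda>t. 1 / cmod (1 - of_real r * cis t) ^ (2*n)) has_integral
           (2*pi * (\<Sum>k. real ((k+n-1) choose k)^2 * (r^2)^k))) {0..2*pi}"
proof -
  define A where "A k = real ((k+n-1) choose k)" for k
  define F where "F t = inverse ((1 - of_real r * cis t)^n)" for t
  define T where "T k t = of_real (A k * r^k) * cis (real k * t)" for k t
  have nz: "1 - of_real r * cis t \<noteq> 0" for t
  proof
    assume "1 - of_real r * cis t = 0"
    then have "norm (of_real r * cis t) = 1" by (metis norm_one right_minus_eq)
    with r show False by (simp add: norm_mult)
  qed
  have sumsF: "(\<lambda>k. T k t) sums F t" for t
  proof -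
    have "norm (of_real r * cis t) < 1" using r by (simp add: norm_mult)
    moreover have "T k t = of_nat ((k + n - 1) choose k) * (of_real r * cis t)^k" for k
      by (simp add: T_def A_def power_mult_distrib Complex.DeMoivre)
    ultimately show ?thesis using ser[OF _ n] by (simp add: F_def)
  qed
  have summA: "summable (\<lambda>k. A k * r^k)"
  proof -
    have "norm (complex_of_real r) < 1" using r by simp
    from sums_summable[OF ser[OF this n]] show ?thesis
      unfolding A_def by (simp flip: summable_complex_of_real)
  qed
  have A0: "A k \<ge> 0" for k by (simp add: A_def)
  have normT: "norm (T k t) = A k * r^k" for k t
    using r A0 by (simp add: T_def norm_mult abs_mult norm_power)
  define B where "B = (\<Sum>k. A k * r^k)"
  have FB: "norm (F t) \<le> B" for t
  proof -
    have "summable (\<lambda>k. norm (T k t))" using summA by (simp add: normT)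
    then have "norm (suminf (\<lambda>k. T k t)) \<le> (\<Sum>k. norm (T k t))" by (rule summable_norm)
    then show ?thesis using sums_unique[OF sumsF[of t]] by (simp add: normT B_def)
  qed
  have contF: "continuous_on S F" for S
    unfolding F_def using nz by (intro continuous_intros) auto
  have step1: "((\<lambda>t. cis (- (real j * t)) * F t) has_integral of_real (2*pi*(A j * r^j))) {0..2*pi}" for j
  proof -
    define G where "G N t = (\<Sum>k<N. cis (- (real j * t)) * T k t)" for N t
    have ul: "uniform_limit {0..2*pi} G (\<lambda>t. suminf (\<lambda>k. cis (- (real j * t)) * T k t)) sequentially"
      unfolding G_def by (rule Weierstrass_m_test[OF _ summA]) (simp add: norm_mult normT)
    have lim: "suminf (\<lambda>k. cis (- (real j * t)) * T k t) = cis (- (real j * t)) * F t" for t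
      using sums_mult[OF sumsF[of t], of "cis (- (real j * t))"] by (simp add: sums_iff)
    have cont: "continuous_on {0..2*pi} (G N)" for N
      unfolding G_def T_def by (intro continuous_intros)
    obtain I J where I: "\<And>N. (G N has_integral I N) {0..2*pi}"
      and J: "((\<lambda>t. cis (- (real j * t)) * F t) has_integral J) {0..2*pi}" and IJ: "I \<longlonglongrightarrow> J"
      using uniform_limit_integral[OF ul cont] lim by auto
    have Ik: "((\<lambda>t. cis (- (real j * t)) * T k t) has_integral
               (if k = j then of_real (2*pi*(A j * r^j)) else 0)) {0..2*pi}" for k
    proof -
      have e: "cis (- (real j * t)) * T k t = of_real (A k * r^k) * cis (of_int (int k - int j) * t)" for t
        by (simp add: T_def cis_mult algebra_simps)
      have ee: "(\<lambda>t. cis (- (real j * t)) * T k t) = (\<lambda>t. of_real (A k * r^k) * cis (of_int (int k - int j) * t))"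
        by (rule ext) (rule e)
      have "of_real (A k * r^k) * complex_of_real (if int k - int j = 0 then 2*pi else 0) = (if k = j then of_real (2*pi*(A j * r^j)) else 0)"
        by (cases "k = j") auto
      then show ?thesis unfolding ee
        using has_integral_mult_right[OF cis_int[of "int k - int j"], of "of_real (A k * r^k)"]
        by simp
    qed
    have IN: "I N = (\<Sum>k<N. if k = j then of_real (2*pi*(A j * r^j)) else 0)" for N
    proof -
      have "(G N has_integral (\<Sum>k<N. if k = j then of_real (2*pi*(A j * r^j)) else 0)) {0..2*pi}"
        unfolding G_def by (rule has_integral_sum) (use Ik in auto)
      then show ?thesis using I has_integral_unique by blast
    qed
    have "eventually (\<lambda>N. I N = of_real (2*pi*(A j * r^j))) sequentially"
      using eventually_gt_at_top[of j] by eventually_elim (auto simp: IN)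
    then have "I \<longlonglongrightarrow> of_real (2*pi*(A j * r^j))"
      by (rule tendsto_eventually)
    with IJ have "J = of_real (2*pi*(A j * r^j))" using LIMSEQ_unique by blast
    with J show ?thesis by simp
  qed
  define S where "S = (\<Sum>k. A k^2 * (r^2)^k)"
  have summ2: "summable (\<lambda>k. A k^2 * (r^2)^k)"
  proof (rule summable_comparison_test[OF _ summable_mult[OF summA, of B]])
    have le: "A k * r^k \<le> B" for k
      unfolding B_def using sum_le_suminf[OF summA, of "{k}"] A0 r by auto
    have "norm (A k^2 * (r^2)^k) \<le> B * (A k * r^k)" for k
    proof -
      have p: "(r^2)^k = (r^k)^2" by (simp add: power_mult[symmetric] mult.commute)
      have "norm (A k^2 * (r^2)^k) = (A k * r^k) * (A k * r^k)"
        using A0[of k] r by (simp add: p power2_eq_square power_mult_distrib)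
      also have "\<dots> \<le> B * (A k * r^k)"
        by (rule mult_right_mono[OF le]) (use A0 r in simp)
      finally show ?thesis .
    qed
    then show "\<exists>N. \<forall>k\<ge>N. norm (A k^2 * (r^2)^k) \<le> B * (A k * r^k)" by blast
  qed
  have cF: "(\<lambda>k. cnj (T k t)) sums cnj (F t)" for t using sumsF[of t] by (simp add: sums_cnj)
  have main: "((\<lambda>t. cnj (F t) * F t) has_integral of_real (2*pi*S)) {0..2*pi}"
  proof -
    define H where "H N t = (\<Sum>k<N. of_real (A k * r^k) * (cis (- (real k * t)) * F t))" for N t
    have cT: "cnj (T k t) = of_real (A k * r^k) * cis (- (real k * t))" for k t
      by (simp add: T_def cis_cnj)
    have ul: "uniform_limit {0..2*pi} H (\<lambda>t. suminf (\<lambda>k. of_real (A k * r^k) * (cis (- (real k * t)) * F t))) sequentially"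
      unfolding H_def
    proof (rule Weierstrass_m_test[OF _ summable_mult2[OF summA, of B]])
      fix k t show "norm (of_real (A k * r^k) * (cis (- (real k * t)) * F t)) \<le> A k * r^k * B"
        using FB[of t] A0[of k] r by (simp add: norm_mult abs_mult norm_power mult_left_mono)
    qed
    have lim: "suminf (\<lambda>k. of_real (A k * r^k) * (cis (- (real k * t)) * F t)) = cnj (F t) * F t" for t
      using sums_mult2[OF cF[of t], of "F t"] by (simp add: sums_iff cT mult_ac)
    have cont: "continuous_on {0..2*pi} (H N)" for N
      unfolding H_def by (intro continuous_intros contF)
    obtain I J where I: "\<And>N. (H N has_integral I N) {0..2*pi}"
      and J: "((\<lambda>t. cnj (F t) * F t) has_integral J) {0..2*pi}" and IJ: "I \<longlonglongrightarrow> J"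
      using uniform_limit_integral[OF ul cont] lim by auto
    have IN2: "I N = (\<Sum>k<N. of_real (2*pi * (A k^2 * (r^2)^k)))" for N
    proof -
      have "(H N has_integral (\<Sum>k<N. of_real (A k * r^k) * of_real (2*pi*(A k * r^k)))) {0..2*pi}"
        unfolding H_def by (intro has_integral_sum has_integral_mult_right step1) auto
      then have "I N = (\<Sum>k<N. of_real (A k * r^k) * of_real (2*pi*(A k * r^k)))"
        using I has_integral_unique by blast
      also have "\<dots> = (\<Sum>k<N. of_real (2*pi * (A k^2 * (r^2)^k)))"
        by (intro sum.cong refl) (simp add: power2_eq_square power_mult_distrib mult_ac)
      finally show ?thesis .
    qed
    moreover have "(\<lambda>N. \<Sum>k<N. of_real (2*pi * (A k^2 * (r^2)^k))) \<longlonglongrightarrow> (of_real (2*pi*S) :: complex)"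
    proof -
      have "(\<lambda>k. 2*pi * (A k^2 * (r^2)^k)) sums (2*pi*S)"
        unfolding S_def using summ2 by (intro sums_mult summable_sums)
      then have "(\<lambda>k. complex_of_real (2*pi * (A k^2 * (r^2)^k))) sums of_real (2*pi*S)"
        by (simp only: sums_of_real)
      then show ?thesis by (simp add: sums_def)
    qed
    moreover have "I = (\<lambda>N. \<Sum>k<N. of_real (2*pi * (A k^2 * (r^2)^k)))" by (rule ext) (rule IN2)
    ultimately have "I \<longlonglongrightarrow> of_real (2*pi*S)" by simp
    with IJ J show ?thesis using LIMSEQ_unique by metis
  qed
  have eq: "Re (cnj (F t) * F t) = 1 / cmod (1 - of_real r * cis t) ^ (2*n)" for t
  proof -
    have "cnj (F t) * F t = of_real (norm (F t))^2" by (metis complex_norm_square mult.commute of_real_power)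
    then have "Re (cnj (F t) * F t) = norm (F t) ^ 2" by (metis Re_complex_of_real of_real_power)
    also have "\<dots> = 1 / cmod (1 - of_real r * cis t) ^ (2*n)"
      by (simp add: F_def norm_inverse norm_power power_mult power_inverse flip: inverse_eq_divide) (simp add: power_mult[symmetric] mult.commute)
    finally show ?thesis .
  qed
  have "(\<lambda>t. Re (cnj (F t) * F t)) = (\<lambda>t. 1 / cmod (1 - of_real r * cis t) ^ (2*n))"
    by (rule ext) (rule eq)
  with has_integral_Re[OF main] show ?thesis by (simp only: S_def A_def Re_complex_of_real)
qed
lemma pascal_step:
  fixes f :: "nat \<Rightarrow> real"
  shows "(\<Sum>j\<le>Suc n. (-1)^j * real (Suc n choose j) * f j) =
         (\<Sum>j\<le>n. (-1)^j * real (n choose j) * (f j - f (Suc j)))"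
proof -
  have split: "(-1)^j * real (Suc n choose j) * f j =
      (-1)^j * real (n choose j) * f j + (if j = 0 then 0 else (-1)^j * real (n choose (j - 1)) * f j)" for j
    by (cases j) (simp_all add: algebra_simps)
  have "(\<Sum>j\<le>Suc n. (-1)^j * real (Suc n choose j) * f j) =
        (\<Sum>j\<le>Suc n. (-1)^j * real (n choose j) * f j) +
        (\<Sum>j\<le>Suc n. (if j = 0 then 0 else (-1)^j * real (n choose (j - 1)) * f j))"
    by (simp only: split sum.distrib)
  also have "(\<Sum>j\<le>Suc n. (-1)^j * real (n choose j) * f j) = (\<Sum>j\<le>n. (-1)^j * real (n choose j) * f j)"
    by (simp add: sum.atMost_Suc)
  also have "(\<Sum>j\<le>Suc n. (if j = 0 then 0 else (-1)^j * real (n choose (j - 1)) * f j)) =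
        (\<Sum>j\<le>n. - ((-1)^j * real (n choose j) * f (Suc j)))"
    by (subst sum.atMost_Suc_shift) simp
  finally show ?thesis by (simp add: sum_subtractf algebra_simps sum_negf)
qed

lemma deg_diff_shift:
  fixes q :: "real poly"
  assumes "degree q > 0"
  shows "degree (q - pcompose q [:1, 1:]) < degree q"
proof -
  let ?p = "q - pcompose q [:1, 1:]"
  have dc: "degree (pcompose q [:1, 1:]) = degree q" by (simp add: degree_pcompose)
  have lc: "lead_coeff (pcompose q [:1, 1:]) = lead_coeff q" by (simp add: lead_coeff_comp)
  have le: "degree ?p \<le> degree q" using degree_diff_le[of q "degree q" "pcompose q [:1,1:]"] dc by simp
  have c: "coeff ?p (degree q) = 0" using lc dc by simp
  show ?thesis
  proof (rule ccontr)
    assume "\<not> degree ?p < degree q"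
    then have "degree ?p = degree q" using le by simp
    then have "?p = 0" using c leading_coeff_0_iff by metis
    then show False using \<open>\<not> degree ?p < degree q\<close> assms by simp
  qed
qed

lemma fin_diff:
  fixes q :: "real poly"
  shows "degree q < n \<Longrightarrow> (\<Sum>j\<le>n. (-1)^j * real (n choose j) * poly q (real j)) = 0"
proof (induction n arbitrary: q)
  case 0
  then show ?case by simp
next
  case (Suc n)
  define q' where "q' = q - pcompose q [:1, 1:]"
  have pq: "poly q (real j) - poly q (real (Suc j)) = poly q' (real j)" for j
    by (simp add: q'_def poly_pcompose algebra_simps)
  have "(\<Sum>j\<le>Suc n. (-1)^j * real (Suc n choose j) * poly q (real j)) =
        (\<Sum>j\<le>n. (-1)^j * real (n choose j) * poly q' (real j))"
    by (subst pascal_step) (simp only: pq)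
  also have "\<dots> = 0"
  proof (cases "degree q = 0")
    case True
    then obtain c where "q = [:c:]" by (metis degree_eq_zeroE)
    then have "q' = 0" by (simp add: q'_def)
    then show ?thesis by simp
  next
    case False
    then have "degree q' < n" using deg_diff_shift[of q] Suc.prems by (simp add: q'_def)
    then show ?thesis by (rule Suc.IH)
  qed
  finally show ?case .
qed
lemma binom_poly:
  assumes "n \<ge> 1"
  shows "\<exists>P::real poly. degree P \<le> n - 1 \<and> (\<forall>m. poly P (real m) = real ((m + n - 1) choose m))"
proof -
  define P :: "real poly" where "P = smult (1 / fact (n-1)) (\<Prod>i\<in>{0..<n-1}. [:1 + of_nat i, 1:])"
  have "degree P \<le> n - 1"
  proof -
    have "degree (\<Prod>i\<in>{0..<n-1}. [:1 + of_nat i, 1::real:]) \<le> (\<Sum>i\<in>{0..<n-1}. (degree \<circ> (\<lambda>i. [:1 + of_nat i, 1::real:])) i)"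
      by (rule degree_prod_sum_le) simp
    also have "\<dots> = n - 1" by simp
    finally show ?thesis unfolding P_def by (meson degree_smult_le order_trans)
  qed
  moreover have "poly P (real m) = real ((m + n - 1) choose m)" for m
  proof -
    have "real ((m + n - 1) choose m) = real ((m + n - 1) choose (n - 1))"
      using binomial_symmetric[of m "m + n - 1"] assms by simp
    also have "\<dots> = (of_nat (m + n - 1) gchoose (n - 1))" by (simp add: binomial_gbinomial)
    also have "\<dots> = pochhammer (real m + 1) (n - 1) / fact (n - 1)"
      using assms by (simp add: gbinomial_pochhammer' of_nat_diff)
    also have "\<dots> = poly P (real m)"
      by (simp add: P_def pochhammer_prod poly_prod add_ac)
    finally show ?thesis by simp
  qed
  ultimately show ?thesis by blast
qed

lemma summ_sq:
  assumes x: "0 \<le> x" "x < 1" and n: "n \<ge> 1"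
  shows "summable (\<lambda>k. real ((k+n-1) choose k)^2 * x^k)"
proof -
  define A where "A k = real ((k+n-1) choose k)" for k
  define s where "s = sqrt x"
  have s: "0 \<le> s" "s < 1" "x = s^2" using x by (auto simp: s_def)
  have summA: "summable (\<lambda>k. A k * s^k)"
  proof -
    have "norm (complex_of_real s) < 1" using s by simp
    from sums_summable[OF ser[OF this n]] show ?thesis
      unfolding A_def by (simp flip: summable_complex_of_real)
  qed
  have A0: "A k \<ge> 0" for k by (simp add: A_def)
  define B where "B = (\<Sum>k. A k * s^k)"
  have le: "A k * s^k \<le> B" for k
    unfolding B_def using sum_le_suminf[OF summA, of "{k}"] A0 s by auto
  have "summable (\<lambda>k. A k^2 * (s^2)^k)"
  proof (rule summable_comparison_test[OF _ summable_mult[OF summA, of B]])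
    have "norm (A k^2 * (s^2)^k) \<le> B * (A k * s^k)" for k
    proof -
      have p: "(s^2)^k = (s^k)^2" by (simp add: power_mult[symmetric] mult.commute)
      have "norm (A k^2 * (s^2)^k) = (A k * s^k) * (A k * s^k)"
        using A0[of k] s by (simp add: p power2_eq_square power_mult_distrib)
      also have "\<dots> \<le> B * (A k * s^k)"
        by (rule mult_right_mono[OF le]) (use A0 s in simp)
      finally show ?thesis .
    qed
    then show "\<exists>N. \<forall>k\<ge>N. norm (A k^2 * (s^2)^k) \<le> B * (A k * s^k)" by blast
  qed
  then show ?thesis using s by (simp add: A_def)
qed

definition cc :: "nat \<Rightarrow> nat \<Rightarrow> real" where
  "cc n k = (\<Sum>j=0..k. (-1)^j * real ((2*n-1) choose j) * real ((k - j + n - 1) choose (k - j))^2)"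

lemma cc_zero:
  assumes n: "n \<ge> 1" and k: "k \<ge> 2*n - 1"
  shows "cc n k = 0"
proof -
  obtain P :: "real poly" where dP: "degree P \<le> n - 1" and vP: "\<And>m. poly P (real m) = real ((m + n - 1) choose m)"
    using binom_poly[OF n] by blast
  define q where "q = pcompose (P^2) [:real k, -1:]"
  have dq: "degree q < 2*n - 1"
  proof -
    have "degree q \<le> degree (P^2) * 1" unfolding q_def using degree_pcompose[of "P^2" "[:real k, -1:]"] by simp
    also have "degree (P^2) \<le> 2 * (n - 1)" using degree_power_le[of P 2] dP by simp
    finally show ?thesis using n by simp
  qed
  have "cc n k = (\<Sum>j\<le>2*n-1. (-1)^j * real ((2*n-1) choose j) * real ((k - j + n - 1) choose (k - j))^2)"
  proof -
    have "cc n k = (\<Sum>j\<le>k. (-1)^j * real ((2*n-1) choose j) * real ((k - j + n - 1) choose (k - j))^2)"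
      by (simp add: cc_def atLeast0AtMost)
    also have "\<dots> = (\<Sum>j\<le>2*n-1. (-1)^j * real ((2*n-1) choose j) * real ((k - j + n - 1) choose (k - j))^2)"
      by (rule sum.mono_neutral_right) (use k in auto)
    finally show ?thesis .
  qed
  also have "\<dots> = (\<Sum>j\<le>2*n-1. (-1)^j * real ((2*n-1) choose j) * poly q (real j))"
  proof (rule sum.cong[OF refl])
    fix j assume "j \<in> {..2*n-1}"
    then have "j \<le> k" using k by simp
    then have "poly q (real j) = poly P (real (k - j))^2"
      by (simp add: q_def poly_pcompose of_nat_diff)
    then show "(-1)^j * real ((2*n-1) choose j) * real ((k - j + n - 1) choose (k - j))^2 =
               (-1)^j * real ((2*n-1) choose j) * poly q (real j)" by (simp add: vP)
  qed
  also have "\<dots> = 0" by (rule fin_diff[OF dq])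
  finally show ?thesis .
qed

lemma poly_id:
  assumes x: "0 \<le> x" "x < 1" and n: "n \<ge> 1"
  shows "(1 - x)^(2*n-1) * (\<Sum>k. real ((k+n-1) choose k)^2 * x^k) = (\<Sum>k=0..2*n-2. cc n k * x^k)"
proof -
  define a where "a j = (-1)^j * real ((2*n-1) choose j) * x^j" for j
  define b where "b k = real ((k+n-1) choose k)^2 * x^k" for k
  have a0: "a j = 0" if "j \<notin> {..2*n-1}" for j using that by (simp add: a_def)
  have sa: "summable (\<lambda>k. norm (a k))"
    by (rule summable_finite[of "{..2*n-1}"]) (auto simp: a0)
  have sb: "summable (\<lambda>k. norm (b k))"
    using summ_sq[OF x n] x by (simp add: b_def)
  have suma: "(\<Sum>k. a k) = (1 - x)^(2*n-1)"
  proof -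
    have "(\<Sum>k. a k) = (\<Sum>k\<le>2*n-1. a k)" by (rule suminf_finite) (auto simp: a0)
    also have "\<dots> = (\<Sum>k\<le>2*n-1. of_nat ((2*n-1) choose k) * (-x)^k * 1^(2*n-1-k))"
    proof (intro sum.cong refl)
      fix k
      have pm: "(-x)^k = (-1)^k * x^k" by (rule power_minus)
      show "a k = of_nat ((2*n-1) choose k) * (-x)^k * 1^(2*n-1-k)" by (simp add: a_def pm)
    qed
    also have "\<dots> = (-x + 1)^(2*n-1)" by (rule binomial_ring[symmetric])
    finally show ?thesis by simp
  qed
  have cp: "(\<lambda>k. \<Sum>i\<le>k. a i * b (k - i)) sums ((\<Sum>k. a k) * (\<Sum>k. b k))"
    by (rule Cauchy_product_sums[OF sa sb])
  have coef: "(\<Sum>i\<le>k. a i * b (k - i)) = cc n k * x^k" for k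
  proof -
    have "(\<Sum>i\<le>k. a i * b (k - i)) = (\<Sum>i\<le>k. ((-1)^i * real ((2*n-1) choose i) * real ((k - i + n - 1) choose (k - i))^2) * x^k)"
    proof (rule sum.cong[OF refl])
      fix i assume "i \<in> {..k}"
      then have "x^i * x^(k-i) = x^k" by (simp add: power_add[symmetric])
      then show "a i * b (k - i) = ((-1)^i * real ((2*n-1) choose i) * real ((k - i + n - 1) choose (k - i))^2) * x^k"
        by (simp add: a_def b_def mult_ac)
    qed
    also have "\<dots> = cc n k * x^k" by (simp add: cc_def sum_distrib_right atLeast0AtMost)
    finally show ?thesis .
  qed
  have "(\<lambda>k. cc n k * x^k) sums ((1 - x)^(2*n-1) * (\<Sum>k. b k))"
    using cp by (simp add: coef suma)
  then have "(1 - x)^(2*n-1) * (\<Sum>k. b k) = (\<Sum>k. cc n k * x^k)" by (simp add: sums_iff)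
  also have "\<dots> = (\<Sum>k\<in>{0..2*n-2}. cc n k * x^k)"
    by (rule suminf_finite) (use cc_zero[OF n] in auto)
  finally show ?thesis unfolding b_def .
qed
lemma taylor_pow:
  fixes r :: real
  assumes "0 \<le> r" "r \<le> 1"
  shows "\<bar>r^m - 1 + real m * (1 - r)\<bar> \<le> real m^2 * (1 - r)^2"
proof -
  have e: "r^m - 1 + real m * (1 - r) = (1 - r) * (\<Sum>i<m. (1 - r^i))"
  proof -
    have "1 - r^m = (1 - r) * (\<Sum>i<m. r^i)" by (rule one_diff_power_eq)
    moreover have "(\<Sum>i<m. (1 - r^i)) = real m - (\<Sum>i<m. r^i)" by (simp add: sum_subtractf)
    ultimately have "r^m = 1 - (1 - r) * (\<Sum>i<m. r^i)" by simp
    then show ?thesis by (simp add: sum_subtractf algebra_simps)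
  qed
  have b: "0 \<le> 1 - r^i \<and> 1 - r^i \<le> real m * (1 - r)" if "i < m" for i
  proof
    show "0 \<le> 1 - r^i" using assms by (simp add: power_le_one)
    have "1 + real i * (-(1 - r)) \<le> (1 + (-(1-r)))^i"
      by (rule Bernoulli_inequality) (use assms in simp)
    then have "1 - r^i \<le> real i * (1 - r)" by (simp add: algebra_simps)
    also have "\<dots> \<le> real m * (1 - r)" using that assms by (intro mult_right_mono) auto
    finally show "1 - r^i \<le> real m * (1 - r)" .
  qed
  have s0: "0 \<le> (\<Sum>i<m. (1 - r^i))" using b by (intro sum_nonneg) auto
  have s1: "(\<Sum>i<m. (1 - r^i)) \<le> real m * (real m * (1 - r))"
    using sum_mono[of "{..<m}" "\<lambda>i. 1 - r^i" "\<lambda>i. real m * (1 - r)"] b by simp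
  have "\<bar>r^m - 1 + real m * (1 - r)\<bar> = (1 - r) * (\<Sum>i<m. (1 - r^i))"
    using e s0 assms by simp
  also have "\<dots> \<le> (1 - r) * (real m * (real m * (1 - r)))"
    using s1 assms by (intro mult_left_mono) auto
  finally show ?thesis by (simp add: power2_eq_square mult_ac)
qed

lemma M0_eq:
  assumes n: "n \<ge> 1" and r: "0 \<le> r" "r < 1"
  shows "(1 / (2*pi)) * integral {0..2*pi} (\<lambda>t. u_kernel n (complex_of_real r * cis t)) =
         (\<Sum>k=0..2*n-2. cc n k * (r^2)^k)"
proof -
  define S where "S = (\<Sum>k. real ((k+n-1) choose k)^2 * (r^2)^k)"
  have eqk: "u_kernel n (complex_of_real r * cis t) = (1 - r^2)^(2*n-1) * (1 / cmod (1 - of_real r * cis t) ^ (2*n))" for t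
    using r by (simp add: u_kernel_def norm_mult)
  have "((\<lambda>t. u_kernel n (complex_of_real r * cis t)) has_integral (1 - r^2)^(2*n-1) * (2*pi*S)) {0..2*pi}"
    unfolding eqk S_def by (rule has_integral_mult_right[OF int_main[OF r n]])
  then have "integral {0..2*pi} (\<lambda>t. u_kernel n (complex_of_real r * cis t)) = (1 - r^2)^(2*n-1) * (2*pi*S)"
    by (rule integral_unique)
  moreover have "(1 - r^2)^(2*n-1) * S = (\<Sum>k=0..2*n-2. cc n k * (r^2)^k)"
    unfolding S_def by (rule poly_id) (use r n in \<open>auto simp: power_less_one_iff abs_square_less_1\<close>)
  ultimately show ?thesis by simp
qed

lemma part_one:
  assumes n: "n \<ge> 1"
  shows "(\<lambda>r. (1 / (2*pi)) * integral {0..2*pi} (\<lambda>t. u_kernel n (complex_of_real r * cis t))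
            - (const_a n + const_b n * (1 - r))) \<in> O[at_left 1](\<lambda>r. (1 - r)^2)"
proof -
  define N where "N = 2*n-2"
  define C where "C = (\<Sum>k=0..N. \<bar>cc n k\<bar> * real (2*k)^2)"
  have ca: "const_a n = (\<Sum>k=0..N. cc n k)" by (simp add: const_a_def cc_def N_def)
  have cb: "const_b n = - (\<Sum>k=0..N. 2 * real k * cc n k)"
  proof -
    have "(\<Sum>k=1..N. 2 * real k * cc n k) = (\<Sum>k=0..N. 2 * real k * cc n k)"
      by (rule sum.mono_neutral_left) auto
    then show ?thesis by (simp add: const_b_def cc_def N_def)
  qed
  have "eventually (\<lambda>r. r \<in> {0<..<1}) (at_left (1::real))" by (rule eventually_at_left_real) simp
  then have "eventually (\<lambda>r. norm ((1 / (2*pi)) * integral {0..2*pi} (\<lambda>t. u_kernel n (complex_of_real r * cis t))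
            - (const_a n + const_b n * (1 - r))) \<le> C * norm ((1 - r)^2)) (at_left 1)"
  proof eventually_elim
    case (elim r)
    then have r: "0 \<le> r" "r < 1" by auto
    have "(1 / (2*pi)) * integral {0..2*pi} (\<lambda>t. u_kernel n (complex_of_real r * cis t))
            - (const_a n + const_b n * (1 - r)) = (\<Sum>k=0..N. cc n k * (((r^2)^k) - 1 + real (2*k) * (1 - r)))"
      unfolding M0_eq[OF n r] ca cb N_def
      by (simp add: sum_distrib_left sum_subtractf sum.distrib algebra_simps sum_distrib_right)
    also have "norm \<dots> \<le> (\<Sum>k=0..N. \<bar>cc n k\<bar> * (real (2*k)^2 * (1 - r)^2))"
      unfolding real_norm_def
    proof (rule order_trans[OF sum_abs sum_mono])
      fix k
      have p: "(r^2)^k = r^(2*k)" by (simp add: power_mult)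
      have "\<bar>(r^2)^k - 1 + real (2*k) * (1 - r)\<bar> \<le> real (2*k)^2 * (1 - r)^2"
        unfolding p by (rule taylor_pow) (use r in auto)
      then show "\<bar>cc n k * ((r^2)^k - 1 + real (2*k) * (1 - r))\<bar> \<le> \<bar>cc n k\<bar> * (real (2*k)^2 * (1 - r)^2)"
        unfolding abs_mult by (rule mult_left_mono) simp
    qed
    also have "\<dots> = C * norm ((1 - r)^2)" by (simp add: C_def sum_distrib_right sum_distrib_left mult_ac)
    finally show ?case .
  qed
  then show ?thesis by (rule bigoI)
qed
lemma cos_lower_half:
  assumes "0 \<le> t" "t \<le> pi"
  shows "t^2 \<le> 18 * (1 - cos t)"
proof -
  define y where "y = t / 2"
  have y: "0 \<le> y" "y < 2" using assms pi_less_4 by (auto simp: y_def)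
  have "\<bar>sin y - (\<Sum>m<3. sin_coeff m * y ^ m)\<bar> \<le> inverse (fact 3) * \<bar>y\<bar> ^ 3"
    by (rule Maclaurin_sin_bound)
  moreover have "(\<Sum>m<3. sin_coeff m * y ^ m) = y"
    by (simp add: eval_nat_numeral sin_coeff_def)
  ultimately have "y - y^3 / 6 \<le> sin y" using y by (simp add: eval_nat_numeral abs_if split: if_splits)
  moreover have "y / 3 \<le> y - y^3 / 6"
  proof -
    have "y^2 \<le> 2^2" using y by (intro power_mono) auto
    then have "y * y^2 \<le> y * 4" using y by (intro mult_left_mono) auto
    then show ?thesis by (simp add: power3_eq_cube power2_eq_square)
  qed
  ultimately have s: "y / 3 \<le> sin y" by linarith
  have "(y/3)^2 \<le> (sin y)^2" by (rule power_mono[OF s]) (use y in simp)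
  moreover have "cos t = 1 - 2 * sin y ^ 2" using cos_double_sin[of y] by (simp add: y_def)
  ultimately show ?thesis by (simp add: y_def power_divide)
qed

lemma cos_lower:
  assumes "0 \<le> t" "t \<le> 2*pi"
  shows "t^2 \<le> 18 * (1 - cos t) \<or> (2*pi - t)^2 \<le> 18 * (1 - cos t)"
proof (cases "t \<le> pi")
  case True
  then show ?thesis using cos_lower_half assms by auto
next
  case False
  have "cos (2*pi - t) = cos t" by (simp add: cos_diff)
  then show ?thesis using cos_lower_half[of "2*pi - t"] False assms by auto
qed

lemma periodic_bound:
  fixes g f1 f2 :: "real \<Rightarrow> complex"
  assumes d1: "\<And>t. (g has_vector_derivative f1 t) (at t)"
      and d2: "\<And>t. (f1 has_vector_derivative f2 t) (at t)"
      and c2: "continuous_on UNIV f2"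
      and per: "\<And>t. g (t + 2*pi) = g t"
  shows "\<exists>M. \<forall>t\<in>{0..2*pi}. norm (g t - g 0 - of_real (sin t) * f1 0) \<le> M * (1 - cos t)"
proof -
  define c where "c = f1 0"
  define h where "h t = g t - of_real (sin t) * c" for t
  define h1 where "h1 t = f1 t - of_real (cos t) * c" for t
  define h2 where "h2 t = f2 t + of_real (sin t) * c" for t
  have dh: "(h has_vector_derivative h1 t) (at t within S)" for t S
  proof -
    have "(h has_vector_derivative (f1 t - of_real (cos t) * c)) (at t)"
      unfolding h_def by (intro derivative_intros d1 DERIV_sin)
    then show ?thesis by (simp add: h1_def has_vector_derivative_at_within)
  qed
  have dh1: "(h1 has_vector_derivative h2 t) (at t within S)" for t S
  proof -
    have "(h1 has_vector_derivative (f2 t - of_real (- sin t) * c)) (at t)"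
      unfolding h1_def by (intro derivative_intros d2 DERIV_cos)
    then show ?thesis by (simp add: h2_def has_vector_derivative_at_within)
  qed
  have f1per: "f1 (2*pi) = f1 0"
  proof -
    have e: "(\<lambda>s. g (s + 2*pi)) = g" by (rule ext) (rule per)
    have "((\<lambda>s. s + 2*pi) has_vector_derivative 1) (at (0::real))"
      by (intro derivative_eq_intros) auto
    from vector_diff_chain_at[OF this, of g "f1 (0 + 2*pi)"] d1[of "0 + 2*pi"]
    have "(g has_vector_derivative f1 (2*pi)) (at 0)" by (simp add: o_def e)
    with d1[of 0] show ?thesis by (metis vector_derivative_unique_at)
  qed
  have ch2: "continuous_on {0..2*pi} h2"
    unfolding h2_def by (intro continuous_intros continuous_on_subset[OF c2]) auto
  obtain B where B0: "B \<ge> 0" and B: "\<And>t. t \<in> {0..2*pi} \<Longrightarrow> norm (h2 t) \<le> B"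
    using continuous_on_compact_bound[OF compact_Icc ch2] by blast
  have h10: "h1 0 = 0" by (simp add: h1_def c_def)
  have h12: "h1 (2*pi) = 0" by (simp add: h1_def c_def f1per)
  have h0: "h 0 = g 0" by (simp add: h_def)
  have h2pi: "h (2*pi) = g 0" using per[of 0] by (simp add: h_def)
  have b1a: "norm (h1 s) \<le> 3 * B * s" if s: "s \<in> {0..2*pi}" for s
  proof -
    have "norm (h1 s - h1 0 - (s - 0) *\<^sub>R h2 0) \<le> norm (s - 0) * (2 * B)"
    proof (rule vector_differentiable_bound_linearization[of "{0..2*pi}"])
      show "closed_segment 0 s \<subseteq> {0..2*pi}" using s by (auto simp: closed_segment_eq_real_ivl)
      show "norm (h2 x - h2 0) \<le> 2 * B" if "x \<in> {0..2*pi}" for x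
        using B[OF that] B[of 0] norm_triangle_ineq4[of "h2 x" "h2 0"] by auto
    qed (auto intro: dh1)
    moreover have "norm (s *\<^sub>R h2 0) \<le> s * B" using B[of 0] s by (auto intro: mult_left_mono)
    ultimately show ?thesis using s h10 norm_triangle_ineq4[of "h1 s - s *\<^sub>R h2 0" "- (s *\<^sub>R h2 0)"]
      by (auto simp: norm_minus_commute algebra_simps)
  qed
  have b1b: "norm (h1 s) \<le> 3 * B * (2*pi - s)" if s: "s \<in> {0..2*pi}" for s
  proof -
    have "norm (h1 s - h1 (2*pi) - (s - 2*pi) *\<^sub>R h2 (2*pi)) \<le> norm (s - 2*pi) * (2 * B)"
    proof (rule vector_differentiable_bound_linearization[of "{0..2*pi}"])
      show "closed_segment (2*pi) s \<subseteq> {0..2*pi}" using s by (auto simp: closed_segment_eq_real_ivl)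
      show "norm (h2 x - h2 (2*pi)) \<le> 2 * B" if "x \<in> {0..2*pi}" for x
        using B[OF that] B[of "2*pi"] norm_triangle_ineq4[of "h2 x" "h2 (2*pi)"] by auto
    qed (auto intro: dh1)
    moreover have "norm ((s - 2*pi) *\<^sub>R h2 (2*pi)) \<le> (2*pi - s) * B" using B[of "2*pi"] s
      by (auto intro: mult_left_mono)
    ultimately show ?thesis using s h12 norm_triangle_ineq4[of "h1 s - (s - 2*pi) *\<^sub>R h2 (2*pi)" "- ((s - 2*pi) *\<^sub>R h2 (2*pi))"]
      by (auto simp: norm_minus_commute algebra_simps)
  qed
  have ba: "norm (h t - g 0) \<le> 3 * B * t^2" if t: "t \<in> {0..2*pi}" for t
  proof -
    have "norm (h t - h 0 - (t - 0) *\<^sub>R h1 0) \<le> norm (t - 0) * (3 * B * t)"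
    proof (rule vector_differentiable_bound_linearization[of "{0..t}"])
      show "closed_segment 0 t \<subseteq> {0..t}" using t by (auto simp: closed_segment_eq_real_ivl)
      show "norm (h1 x - h1 0) \<le> 3 * B * t" if "x \<in> {0..t}" for x
        using b1a[of x] that t h10 B0 by (auto intro: order_trans[OF _ mult_left_mono])
    qed (use t in \<open>auto intro: dh\<close>)
    then show ?thesis using t h10 h0 by (simp add: power2_eq_square mult_ac)
  qed
  have bb: "norm (h t - g 0) \<le> 3 * B * (2*pi - t)^2" if t: "t \<in> {0..2*pi}" for t
  proof -
    have "norm (h t - h (2*pi) - (t - 2*pi) *\<^sub>R h1 (2*pi)) \<le> norm (t - 2*pi) * (3 * B * (2*pi - t))"
    proof (rule vector_differentiable_bound_linearization[of "{t..2*pi}"])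
      show "closed_segment (2*pi) t \<subseteq> {t..2*pi}" using t by (auto simp: closed_segment_eq_real_ivl)
      show "norm (h1 x - h1 (2*pi)) \<le> 3 * B * (2*pi - t)" if "x \<in> {t..2*pi}" for x
        using b1b[of x] that t h12 B0 by (auto intro: order_trans[OF _ mult_left_mono])
    qed (use t in \<open>auto intro: dh\<close>)
    then have "norm (h t - g 0) \<le> norm (t - 2*pi) * (3 * B * (2*pi - t))" using h12 h2pi by simp
    moreover have "norm (t - 2*pi) * (3 * B * (2*pi - t)) = 3 * B * (2*pi - t)^2"
      using t by (simp add: power2_eq_square)
    ultimately show ?thesis by linarith
  qed
  have "norm (g t - g 0 - of_real (sin t) * f1 0) \<le> (54 * B) * (1 - cos t)" if t: "t \<in> {0..2*pi}" for t
  proof -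
    have e: "g t - g 0 - of_real (sin t) * f1 0 = h t - g 0" by (simp add: h_def c_def)
    have "t^2 \<le> 18 * (1 - cos t) \<or> (2*pi - t)^2 \<le> 18 * (1 - cos t)" using cos_lower[of t] t by auto
    then show ?thesis
    proof
      assume "t^2 \<le> 18 * (1 - cos t)"
      then have "3 * B * t^2 \<le> 3 * B * (18 * (1 - cos t))" using B0 by (intro mult_left_mono) auto
      moreover have "3 * B * (18 * (1 - cos t)) = (54 * B) * (1 - cos t)" by simp
      ultimately show ?thesis using ba[OF t] unfolding e by linarith
    next
      assume "(2*pi - t)^2 \<le> 18 * (1 - cos t)"
      then have "3 * B * (2*pi - t)^2 \<le> 3 * B * (18 * (1 - cos t))" using B0 by (intro mult_left_mono) auto
      moreover have "3 * B * (18 * (1 - cos t)) = (54 * B) * (1 - cos t)" by simp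
      ultimately show ?thesis using bb[OF t] unfolding e by linarith
    qed
  qed
  then show ?thesis by blast
qed
lemma reflect2pi:
  fixes f :: "real \<Rightarrow> 'a::banach"
  assumes "(f has_integral I) {0..2*pi}"
  shows "((\<lambda>x. f (2*pi - x)) has_integral I) {0..2*pi}"
proof -
  have "((\<lambda>x. f (-x)) has_integral I) {-(2*pi)..-0}" by (subst has_integral_reflect_real) (rule assms)
  then have "(((\<lambda>x. f (-x)) \<circ> (+) (-(2*pi))) has_integral I) {0..2*pi}"
    using has_integral_shift_Icc_real[of "\<lambda>x. f (-x)" "-(2*pi)" I 0 "2*pi"] by simp
  then show ?thesis by (simp add: o_def)
qed

lemma dist_sq:
  "cmod (1 - complex_of_real r * cis t) ^ 2 = (1 - r)^2 + 2 * r * (1 - cos t)"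
proof -
  have "cmod (1 - complex_of_real r * cis t) ^ 2 = (1 - r * cos t)^2 + (r * sin t)^2"
    by (simp add: cmod_power2)
  also have "\<dots> = 1 - 2 * r * cos t + r^2"
    by (simp add: power_mult_distrib sin_squared_eq) (simp add: power2_eq_square algebra_simps)
  also have "\<dots> = (1 - r)^2 + 2 * r * (1 - cos t)" by (simp add: power2_eq_square algebra_simps)
  finally show ?thesis .
qed

lemma kernel_nz:
  assumes "0 \<le> r" "r < 1"
  shows "cmod (1 - complex_of_real r * cis t) > 0"
proof -
  have "1 - complex_of_real r * cis t \<noteq> 0"
  proof
    assume "1 - complex_of_real r * cis t = 0"
    then have "norm (complex_of_real r * cis t) = 1" by (metis norm_one right_minus_eq)
    with assms show False by (simp add: norm_mult)
  qed
  then show ?thesis by simp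
qed

lemma kernel_eq:
  assumes "0 \<le> r"
  shows "u_kernel n (complex_of_real r * cis t) = (1 - r^2)^(2*n-1) / cmod (1 - complex_of_real r * cis t) ^ (2*n)"
  using assms by (simp add: u_kernel_def norm_mult)

lemma kernel_cont:
  assumes "0 \<le> r" "r < 1"
  shows "continuous_on S (\<lambda>t. u_kernel n (complex_of_real r * cis t))"
proof -
  have "continuous_on S (\<lambda>t. (1 - r^2)^(2*n-1) / cmod (1 - complex_of_real r * cis t) ^ (2*n))"
    using kernel_nz[OF assms] by (intro continuous_intros) auto
  then show ?thesis using kernel_eq[OF assms(1)] by simp
qed

lemma kernel_sin:
  assumes "0 \<le> r" "r < 1"
  shows "((\<lambda>t. u_kernel n (complex_of_real r * cis t) * sin t) has_integral 0) {0..2*pi}"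
proof -
  define F where "F = (\<lambda>t. u_kernel n (complex_of_real r * cis t) * sin t)"
  have "continuous_on {0..2*pi} F" unfolding F_def by (intro continuous_intros kernel_cont assms)
  then have "F integrable_on {0..2*pi}" by (rule integrable_continuous_real)
  then have I: "(F has_integral integral {0..2*pi} F) {0..2*pi}" by (rule integrable_integral)
  have sym: "F (2*pi - t) = - F t" for t
  proof -
    have "cis (2*pi - t) = cis (-t)" by (simp add: complex_eq_iff cos_diff sin_diff)
    then have c: "cis (2*pi - t) = cnj (cis t)" by (simp add: cis_cnj)
    have "cmod (1 - complex_of_real r * cnj (cis t)) = cmod (cnj (1 - complex_of_real r * cis t))" by simp
    also have "\<dots> = cmod (1 - complex_of_real r * cis t)" by (rule complex_mod_cnj)
    finally have "cmod (1 - complex_of_real r * cis (2*pi - t)) = cmod (1 - complex_of_real r * cis t)" by (simp add: c)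
    moreover have "sin (2*pi - t) = - sin t" by (simp add: sin_diff)
    ultimately show ?thesis unfolding F_def using kernel_eq[OF assms(1), of n] by simp
  qed
  from reflect2pi[OF I] have "((\<lambda>t. - F t) has_integral integral {0..2*pi} F) {0..2*pi}" by (simp add: sym)
  then have "((\<lambda>t. - (- F t)) has_integral - integral {0..2*pi} F) {0..2*pi}" by (rule has_integral_neg)
  then have "(F has_integral - integral {0..2*pi} F) {0..2*pi}" by simp
  with I have "integral {0..2*pi} F = - integral {0..2*pi} F" using has_integral_unique by blast
  then have "integral {0..2*pi} F = 0" by simp
  with I have "(F has_integral 0) {0..2*pi}" by simp
  then show ?thesis by (simp only: F_def)
qed

definition CC :: "nat \<Rightarrow> real" where
  "CC n = (\<Sum>k=0..2*(n-1)-2. \<bar>cc (n-1) k\<bar>)"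

lemma IR_bound:
  fixes R :: "real \<Rightarrow> complex"
  assumes n: "n \<ge> 2" and r: "1/2 < r" "r < 1" and M: "M \<ge> 0"
    and cR: "continuous_on {0..2*pi} R"
    and bR: "\<And>t. t \<in> {0..2*pi} \<Longrightarrow> norm (R t) \<le> M * (1 - cos t)"
  shows "norm (integral {0..2*pi} (\<lambda>t. of_real (u_kernel n (complex_of_real r * cis t)) * R t))
          \<le> 2*pi*(4 * M * CC n) * (1 - r)^2"
proof -
  have r0: "0 \<le> r" using r by simp
  have rr: "0 \<le> 1 - r^2" using power_le_one[of r 2] r by simp
  define d where "d t = cmod (1 - complex_of_real r * cis t)" for t
  have d0: "d t > 0" for t unfolding d_def by (rule kernel_nz) (use r in auto)
  define Q where "Q = (1 - r^2)^(2*n-1) / (2*r)"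
  have Q0: "Q \<ge> 0" unfolding Q_def using r rr by (auto intro!: divide_nonneg_pos)
  define G where "G t = M * Q * (1 / d t ^ (2*(n-1)))" for t
  have pw: "norm (of_real (u_kernel n (complex_of_real r * cis t)) * R t) \<le> G t" if t: "t \<in> {0..2*pi}" for t
  proof -
    have K: "u_kernel n (complex_of_real r * cis t) = (1 - r^2)^(2*n-1) / d t ^ (2*n)"
      using kernel_eq[OF r0] by (simp add: d_def)
    have p0: "0 \<le> (1 - r^2)^(2*n-1)" using rr by simp
    have Kn: "0 \<le> u_kernel n (complex_of_real r * cis t)" unfolding K using p0 d0[of t] by simp
    have cosb: "2 * r * (1 - cos t) \<le> d t ^ 2" using dist_sq[of r t] by (simp add: d_def)
    have "norm (of_real (u_kernel n (complex_of_real r * cis t)) * R t) \<le> u_kernel n (complex_of_real r * cis t) * (M * (1 - cos t))"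
      using bR[OF t] Kn by (simp add: norm_mult mult_left_mono)
    also have "\<dots> = M * ((1 - r^2)^(2*n-1) * (1 - cos t) / d t ^ (2*n))" by (simp add: K)
    also have "\<dots> \<le> M * ((1 - r^2)^(2*n-1) * (d t ^ 2 / (2*r)) / d t ^ (2*n))"
    proof -
      have "1 - cos t \<le> d t ^ 2 / (2*r)" using cosb r by (simp add: field_simps)
      then have "(1 - r^2)^(2*n-1) * (1 - cos t) \<le> (1 - r^2)^(2*n-1) * (d t ^ 2 / (2*r))"
        using p0 by (rule mult_left_mono)
      then have "(1 - r^2)^(2*n-1) * (1 - cos t) / d t ^ (2*n) \<le> (1 - r^2)^(2*n-1) * (d t ^ 2 / (2*r)) / d t ^ (2*n)"
        by (rule divide_right_mono) (use d0[of t] in simp)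
      then show ?thesis by (rule mult_left_mono) (use M in simp)
    qed
    also have "\<dots> = G t"
    proof -
      have e: "2*n = 2 + 2*(n-1)" using n by simp
      have "d t ^ (2*n) = d t ^ 2 * d t ^ (2*(n-1))" by (subst e) (simp only: power_add)
      moreover have "M * (A * (D / (2*r)) / (D * E)) = M * (A / (2*r)) * (1 / E)"
        if "D \<noteq> 0" "E \<noteq> 0" "r \<noteq> 0" for A D E :: real using that by (simp add: field_simps)
      ultimately show ?thesis using d0[of t] r unfolding G_def Q_def by simp
    qed
    finally show ?thesis .
  qed
  define S' where "S' = (\<Sum>k. real ((k+(n-1)-1) choose k)^2 * (r^2)^k)"
  have hG: "(G has_integral M * Q * (2*pi*S')) {0..2*pi}"
    unfolding G_def d_def S'_def
    by (rule has_integral_mult_right[OF int_main[OF r0 r(2)]]) (use n in simp)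
  have int1: "(\<lambda>t. of_real (u_kernel n (complex_of_real r * cis t)) * R t) integrable_on {0..2*pi}"
    by (intro integrable_continuous_real continuous_intros kernel_cont cR r0 r(2))
  have "norm (integral {0..2*pi} (\<lambda>t. of_real (u_kernel n (complex_of_real r * cis t)) * R t)) \<le> integral {0..2*pi} G"
    by (rule integral_norm_bound_integral[OF int1 has_integral_integrable[OF hG] pw])
  also have "\<dots> = M * Q * (2*pi*S')" using hG by (rule integral_unique)
  also have "\<dots> \<le> 2*pi*(4 * M * CC n) * (1 - r)^2"
  proof -
    have x: "0 \<le> r^2" "r^2 < 1" using r by (auto simp: abs_square_less_1)
    have pid: "(1 - r^2)^(2*(n-1)-1) * S' = (\<Sum>k=0..2*(n-1)-2. cc (n-1) k * (r^2)^k)"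
      unfolding S'_def by (rule poly_id[OF x]) (use n in simp)
    have Pb: "\<bar>\<Sum>k=0..2*(n-1)-2. cc (n-1) k * (r^2)^k\<bar> \<le> CC n"
      unfolding CC_def
    proof (rule order_trans[OF sum_abs sum_mono])
      fix k
      have "(r^2)^k \<le> 1" using x by (simp add: power_le_one)
      then show "\<bar>cc (n-1) k * (r^2)^k\<bar> \<le> \<bar>cc (n-1) k\<bar>" using x
        by (simp add: abs_mult mult_left_le)
    qed
    have pw2: "(1 - r^2)^(2*n-1) = (1 - r^2)^2 * (1 - r^2)^(2*(n-1)-1)"
    proof -
      have e: "2*n-1 = 2 + (2*(n-1)-1)" using n by simp
      show ?thesis by (subst e) (simp only: power_add)
    qed
    have "M * Q * (2*pi*S') = 2*pi * M * ((1 - r^2)^2 / (2*r)) * (\<Sum>k=0..2*(n-1)-2. cc (n-1) k * (r^2)^k)"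
    proof -
      have gen: "M * (X * Y / (2*r)) * (2*pi*S') = 2*pi * M * (X / (2*r)) * (Y * S')" for X Y :: real
        by (simp add: field_simps)
      have "M * Q * (2*pi*S') = M * ((1 - r^2)^2 * (1 - r^2)^(2*(n-1)-1) / (2*r)) * (2*pi*S')"
        by (simp only: Q_def pw2)
      also have "\<dots> = 2*pi * M * ((1 - r^2)^2 / (2*r)) * ((1 - r^2)^(2*(n-1)-1) * S')" by (rule gen)
      also have "\<dots> = 2*pi * M * ((1 - r^2)^2 / (2*r)) * (\<Sum>k=0..2*(n-1)-2. cc (n-1) k * (r^2)^k)"
        by (simp only: pid)
      finally show ?thesis .
    qed
    also have "\<dots> \<le> 2*pi * M * (4 * (1 - r)^2) * CC n"
    proof -
      have a: "(1 - r^2)^2 / (2*r) \<le> 4 * (1 - r)^2"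
      proof -
        have "(1 - r^2)^2 = (1-r)^2 * (1+r)^2" by (simp add: power2_eq_square algebra_simps)
        also have "\<dots> \<le> (1-r)^2 * 4" proof (rule mult_left_mono)
          show "(1+r)^2 \<le> 4" using power_mono[of "1+r" 2 2] r by simp
        qed simp
        moreover have "4 * (1 - r)^2 * 1 \<le> 4 * (1 - r)^2 * (2*r)" using r by (intro mult_left_mono) auto
        ultimately have "(1 - r^2)^2 \<le> 4 * (1 - r)^2 * (2*r)" by (simp add: mult_ac)
        then show ?thesis using r by (simp add: divide_le_eq)
      qed
      have b: "(\<Sum>k=0..2*(n-1)-2. cc (n-1) k * (r^2)^k) \<le> CC n" using Pb by linarith
      have c: "0 \<le> (1 - r^2)^2 / (2*r)" using r by simp
      have "M * ((1 - r^2)^2 / (2*r)) * (\<Sum>k=0..2*(n-1)-2. cc (n-1) k * (r^2)^k) \<le> M * ((1 - r^2)^2 / (2*r)) * CC n"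
        by (rule mult_left_mono[OF b]) (rule mult_nonneg_nonneg[OF M c])
      also have "\<dots> \<le> M * (4 * (1 - r)^2) * CC n"
        using a M Pb by (intro mult_right_mono mult_left_mono) auto
      finally have "M * ((1 - r^2)^2 / (2*r)) * (\<Sum>k=0..2*(n-1)-2. cc (n-1) k * (r^2)^k) \<le> M * (4 * (1 - r)^2) * CC n" .
      then have "2*pi * (M * ((1 - r^2)^2 / (2*r)) * (\<Sum>k=0..2*(n-1)-2. cc (n-1) k * (r^2)^k)) \<le> 2*pi * (M * (4 * (1 - r)^2) * CC n)"
        by (rule mult_left_mono) simp
      then show ?thesis by (simp only: mult.assoc)
    qed
    also have "\<dots> = 2*pi*(4 * M * CC n) * (1 - r)^2" by (simp add: mult_ac)
    finally show ?thesis .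
  qed
  finally show ?thesis .
qed
lemma part_two:
  assumes n: "n \<ge> 2" and C2: "C2_circle \<phi>"
  shows "(\<lambda>r. pairing (dilate (\<lambda>z. complex_of_real (u_kernel n z)) r) \<phi>
               - (complex_of_real (const_a n) * \<phi> 1
                  + complex_of_real (const_b n * (1 - r)) * \<phi> 1))
          \<in> O[at_left 1](\<lambda>r. complex_of_real ((1 - r)^2))"
proof -
  obtain f1 f2 where d1: "\<And>t. ((\<lambda>s. \<phi> (cis s)) has_vector_derivative f1 t) (at t)"
    and d2: "\<And>t. (f1 has_vector_derivative f2 t) (at t)" and c2: "continuous_on UNIV f2"
    using C2 unfolding C2_circle_def by blast
  define g where "g = (\<lambda>s. \<phi> (cis s))"
  have dg: "\<And>t. (g has_vector_derivative f1 t) (at t)" using d1 by (simp add: g_def)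
  have per: "g (t + 2*pi) = g t" for t
  proof -
    have "cis (t + 2*pi) = cis t" by (simp add: complex_eq_iff)
    then show ?thesis by (simp add: g_def)
  qed
  obtain M0 where M0: "\<forall>t\<in>{0..2*pi}. norm (g t - g 0 - of_real (sin t) * f1 0) \<le> M0 * (1 - cos t)"
    using periodic_bound[OF dg d2 c2 per] by blast
  define M where "M = max M0 0"
  have M: "M \<ge> 0" by (simp add: M_def)
  define R where "R t = g t - \<phi> 1 - of_real (sin t) * f1 0" for t
  have g0: "g 0 = \<phi> 1" by (simp add: g_def)
  have bR: "norm (R t) \<le> M * (1 - cos t)" if "t \<in> {0..2*pi}" for t
  proof -
    have "M0 * (1 - cos t) \<le> M * (1 - cos t)" unfolding M_def by (rule mult_right_mono) auto
    moreover have "norm (R t) \<le> M0 * (1 - cos t)" using M0 that g0 by (simp add: R_def)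
    ultimately show ?thesis by linarith
  qed
  have cg: "continuous_on S g" for S
    by (rule continuous_on_vector_derivative) (rule has_vector_derivative_at_within[OF dg])
  have cR: "continuous_on {0..2*pi} R" unfolding R_def by (intro continuous_intros cg)
  from part_one[of n] n obtain c1 where c1: "c1 > 0"
    and ev1: "eventually (\<lambda>r. norm ((1 / (2*pi)) * integral {0..2*pi} (\<lambda>t. u_kernel n (complex_of_real r * cis t))
            - (const_a n + const_b n * (1 - r))) \<le> c1 * norm ((1 - r)^2)) (at_left 1)"
    by (auto elim: landau_o.bigE)
  have ev2: "eventually (\<lambda>r. r \<in> {1/2<..<1}) (at_left (1::real))" by (rule eventually_at_left_real) simp
  have "eventually (\<lambda>r. norm (pairing (dilate (\<lambda>z. complex_of_real (u_kernel n z)) r) \<phi>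
               - (complex_of_real (const_a n) * \<phi> 1
                  + complex_of_real (const_b n * (1 - r)) * \<phi> 1))
          \<le> (c1 * norm (\<phi> 1) + 4 * M * CC n) * norm (complex_of_real ((1 - r)^2))) (at_left 1)"
    using ev1 ev2
  proof eventually_elim
    case (elim r)
    then have r: "1/2 < r" "r < 1" and r0: "0 \<le> r" by auto
    define K where "K t = u_kernel n (complex_of_real r * cis t)" for t
    have cK: "continuous_on {0..2*pi} K" unfolding K_def by (rule kernel_cont) (use r in auto)
    define IK where "IK = integral {0..2*pi} K"
    have hK: "(K has_integral IK) {0..2*pi}" unfolding IK_def
      by (rule integrable_integral[OF integrable_continuous_real[OF cK]])
    define IR where "IR = integral {0..2*pi} (\<lambda>t. of_real (K t) * R t)"
    have hR: "((\<lambda>t. of_real (K t) * R t) has_integral IR) {0..2*pi}" unfolding IR_def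
      by (intro integrable_integral integrable_continuous_real continuous_intros cK cR)
    have h1: "((\<lambda>t. of_real (K t) * \<phi> 1) has_integral of_real IK * \<phi> 1) {0..2*pi}"
      by (rule has_integral_mult_left[OF has_integral_of_real[OF hK]])
    have h2: "((\<lambda>t. of_real (K t * sin t) * f1 0) has_integral of_real 0 * f1 0) {0..2*pi}"
      unfolding K_def by (rule has_integral_mult_left[OF has_integral_of_real[OF kernel_sin]]) (use r in auto)
    have dec: "of_real (K t) * \<phi> (cis t) = of_real (K t) * \<phi> 1 + of_real (K t * sin t) * f1 0 + of_real (K t) * R t" for t
      by (simp add: R_def g_def algebra_simps)
    have "((\<lambda>t. of_real (K t) * \<phi> (cis t)) has_integral (of_real IK * \<phi> 1 + of_real 0 * f1 0 + IR)) {0..2*pi}"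
      unfolding dec by (intro has_integral_add h1 h2 hR)
    then have int: "integral {0..2*pi} (\<lambda>t. of_real (K t) * \<phi> (cis t)) = of_real IK * \<phi> 1 + IR"
      by (simp add: integral_unique)
    have P: "pairing (dilate (\<lambda>z. complex_of_real (u_kernel n z)) r) \<phi> = of_real (1/(2*pi)) * (of_real IK * \<phi> 1 + IR)"
      unfolding pairing_def dilate_def using int by (simp add: K_def)
    have E: "pairing (dilate (\<lambda>z. complex_of_real (u_kernel n z)) r) \<phi>
               - (complex_of_real (const_a n) * \<phi> 1 + complex_of_real (const_b n * (1 - r)) * \<phi> 1)
          = of_real ((1 / (2*pi)) * IK - (const_a n + const_b n * (1 - r))) * \<phi> 1 + of_real (1/(2*pi)) * IR"
      unfolding P by (simp add: algebra_simps add_divide_distrib)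
    have b1: "norm (of_real ((1 / (2*pi)) * IK - (const_a n + const_b n * (1 - r))) * \<phi> 1) \<le> c1 * (1 - r)^2 * norm (\<phi> 1)"
    proof -
      have "norm (of_real ((1 / (2*pi)) * IK - (const_a n + const_b n * (1 - r))) * \<phi> 1)
            = \<bar>(1 / (2*pi)) * IK - (const_a n + const_b n * (1 - r))\<bar> * norm (\<phi> 1)"
        by (simp only: norm_mult norm_of_real)
      moreover have "\<bar>(1 / (2*pi)) * IK - (const_a n + const_b n * (1 - r))\<bar> \<le> c1 * (1 - r)^2"
      proof -
        have Keq: "K = (\<lambda>t. u_kernel n (complex_of_real r * cis t))" by (rule ext) (simp add: K_def)
        show ?thesis using elim(1) by (simp add: IK_def Keq)
      qed
      ultimately show ?thesis by (simp add: mult_right_mono)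
    qed
    have "norm IR \<le> 2*pi*(4 * M * CC n) * (1 - r)^2"
      unfolding IR_def K_def by (rule IR_bound[OF n r M cR bR])
    then have "norm IR / (2*pi) \<le> (2*pi*(4 * M * CC n) * (1 - r)^2) / (2*pi)"
      by (rule divide_right_mono) simp
    also have "\<dots> = 4 * M * CC n * (1 - r)^2" by simp
    also have "norm IR / (2*pi) = norm (of_real (1/(2*pi)) * IR)"
      by (simp only: norm_mult norm_of_real) simp
    finally have b2: "norm (of_real (1/(2*pi)) * IR) \<le> 4 * M * CC n * (1 - r)^2" .
    have "norm (pairing (dilate (\<lambda>z. complex_of_real (u_kernel n z)) r) \<phi>
               - (complex_of_real (const_a n) * \<phi> 1 + complex_of_real (const_b n * (1 - r)) * \<phi> 1))
          \<le> c1 * (1 - r)^2 * norm (\<phi> 1) + 4 * M * CC n * (1 - r)^2"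
      unfolding E by (rule order_trans[OF norm_triangle_ineq add_mono[OF b1 b2]])
    also have "\<dots> = (c1 * norm (\<phi> 1) + 4 * M * CC n) * norm (complex_of_real ((1 - r)^2))"
    proof -
      have nr: "norm (complex_of_real ((1 - r)^2)) = (1 - r)^2" by (simp only: norm_of_real) simp
      show ?thesis by (simp only: nr) (simp add: algebra_simps)
    qed
    finally show ?case .
  qed
  then show ?thesis by (rule bigoI)
qed

lemma const_phi: "C2_circle (\<lambda>_. 1)"
  unfolding C2_circle_def
  by (rule exI[of _ "\<lambda>_. 0"], rule exI[of _ "\<lambda>_. 0"]) (auto intro: derivative_intros)

lemma part_three:
  fixes a' b' :: real
  assumes h1: "(\<lambda>r. complex_of_real a' + complex_of_real (b' * (1 - r)) - (complex_of_real A + complex_of_real (B * (1 - r))))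
          \<in> O[at_left 1](\<lambda>r. complex_of_real ((1 - r)^2))"
  shows "a' = A \<and> b' = B"
proof -
  obtain c where c: "c > 0" and ev: "eventually (\<lambda>r. norm (complex_of_real a' + complex_of_real (b' * (1 - r)) - (complex_of_real A + complex_of_real (B * (1 - r))))
     \<le> c * norm (complex_of_real ((1 - r)^2))) (at_left 1)"
    using h1 by (auto elim: landau_o.bigE)
  have ev': "eventually (\<lambda>r. \<bar>(a' - A) + (b' - B) * (1 - r)\<bar> \<le> c * (1 - r)^2) (at_left (1::real))"
    using ev by eventually_elim (simp add: algebra_simps norm_power power2_abs flip: of_real_add of_real_mult of_real_diff)
  have lim0: "((\<lambda>r. 1 - r) \<longlongrightarrow> 0) (at_left (1::real))"
    by (auto intro!: tendsto_eq_intros)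
  have L1: "((\<lambda>r. \<bar>(a' - A) + (b' - B) * (1 - r)\<bar>) \<longlongrightarrow> \<bar>(a' - A) + (b' - B) * 0\<bar>) (at_left (1::real))"
    by (intro tendsto_intros lim0)
  have L2: "((\<lambda>r. c * (1 - r)^2) \<longlongrightarrow> c * 0^2) (at_left (1::real))"
    by (intro tendsto_intros lim0)
  have "\<bar>(a' - A) + (b' - B) * 0\<bar> \<le> c * 0^2"
    by (rule tendsto_le[OF _ L2 L1 ev']) simp
  then have a: "a' = A" by simp
  have ev0: "eventually (\<lambda>x. x \<in> {0<..<1}) (at_left (1::real))" by (rule eventually_at_left_real) simp
  have ev'': "eventually (\<lambda>r. \<bar>b' - B\<bar> \<le> c * (1 - r)) (at_left (1::real))"
    using ev' ev0
  proof eventually_elim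
    case (elim r)
    then have "\<bar>b' - B\<bar> * (1 - r) \<le> (c * (1 - r)) * (1 - r)" using a by (simp add: abs_mult power2_eq_square mult_ac)
    then show ?case using elim(2) by (simp add: mult_le_cancel_right)
  qed
  have L3: "((\<lambda>r. c * (1 - r)) \<longlongrightarrow> c * 0) (at_left (1::real))"
    by (intro tendsto_intros lim0)
  have "\<bar>b' - B\<bar> \<le> c * 0"
    by (rule tendsto_le[OF _ L3 tendsto_const ev'']) simp
  then have "b' = B" by simp
  with a show ?thesis by simp
qed
theorem proposition1p1:
  fixes \<beta> :: nat
  assumes "\<beta> \<ge> 2"
  shows "((\<lambda>r. (1 / (2*pi)) * integral {0..2*pi} (\<lambda>t. u_kernel \<beta> (complex_of_real r * cis t))
            - (const_a \<beta> + const_b \<beta> * (1 - r)))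
          \<in> O[at_left 1](\<lambda>r. (1 - r)^2)) \<and>
       (\<forall>\<phi>. C2_circle \<phi> \<longrightarrow>
          (\<lambda>r. pairing (dilate (\<lambda>z. complex_of_real (u_kernel \<beta> z)) r) \<phi>
               - (complex_of_real (const_a \<beta>) * \<phi> 1
                  + complex_of_real (const_b \<beta> * (1 - r)) * \<phi> 1))
          \<in> O[at_left 1](\<lambda>r. complex_of_real ((1 - r)^2))) \<and>
       (\<forall>a' b' :: real. (\<forall>\<phi>. C2_circle \<phi> \<longrightarrow>
          (\<lambda>r. pairing (dilate (\<lambda>z. complex_of_real (u_kernel \<beta> z)) r) \<phi>
               - (complex_of_real a' * \<phi> 1 + complex_of_real (b' * (1 - r)) * \<phi> 1))
          \<in> O[at_left 1](\<lambda>r. complex_of_real ((1 - r)^2)))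
        \<longrightarrow> a' = const_a \<beta> \<and> b' = const_b \<beta>)"
proof -
  have P1: "(\<lambda>r. (1 / (2*pi)) * integral {0..2*pi} (\<lambda>t. u_kernel \<beta> (complex_of_real r * cis t))
            - (const_a \<beta> + const_b \<beta> * (1 - r))) \<in> O[at_left 1](\<lambda>r. (1 - r)^2)"
    by (rule part_one) (use assms in simp)
  have P2: "\<forall>\<phi>. C2_circle \<phi> \<longrightarrow> (\<lambda>r. pairing (dilate (\<lambda>z. complex_of_real (u_kernel \<beta> z)) r) \<phi>
               - (complex_of_real (const_a \<beta>) * \<phi> 1
                  + complex_of_real (const_b \<beta> * (1 - r)) * \<phi> 1))
          \<in> O[at_left 1](\<lambda>r. complex_of_real ((1 - r)^2))"
    using part_two[OF assms] by blast
  have P3: "a' = const_a \<beta> \<and> b' = const_b \<beta>" if H0: "\<forall>\<phi>. C2_circle \<phi> \<longrightarrow>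
          (\<lambda>r. pairing (dilate (\<lambda>z. complex_of_real (u_kernel \<beta> z)) r) \<phi>
               - (complex_of_real a' * \<phi> 1 + complex_of_real (b' * (1 - r)) * \<phi> 1))
          \<in> O[at_left 1](\<lambda>r. complex_of_real ((1 - r)^2))" for a' b' :: real
  proof -
  have H: "\<forall>\<phi>. C2_circle \<phi> \<longrightarrow>
          (\<lambda>r. pairing (dilate (\<lambda>z. complex_of_real (u_kernel \<beta> z)) r) \<phi>
               - (complex_of_real a' * \<phi> 1 + complex_of_real (b' * (1 - r)) * \<phi> 1))
          \<in> O[at_left 1](\<lambda>r. complex_of_real ((1 - r)^2))" by (rule H0)
  define p where "p r = pairing (dilate (\<lambda>z. complex_of_real (u_kernel \<beta> z)) r) (\<lambda>_. 1)" for r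
  have hA: "(\<lambda>r. p r - (complex_of_real a' + complex_of_real (b' * (1 - r))))
          \<in> O[at_left 1](\<lambda>r. complex_of_real ((1 - r)^2))"
    using H[rule_format, OF const_phi] unfolding p_def by simp
  have hB: "(\<lambda>r. p r - (complex_of_real (const_a \<beta>) + complex_of_real (const_b \<beta> * (1 - r))))
          \<in> O[at_left 1](\<lambda>r. complex_of_real ((1 - r)^2))"
    using part_two[OF assms const_phi] unfolding p_def by simp
  obtain cA where evA: "eventually (\<lambda>r. norm (p r - (complex_of_real a' + complex_of_real (b' * (1 - r))))
     \<le> cA * norm (complex_of_real ((1 - r)^2))) (at_left 1)"
    using hA by (auto elim: landau_o.bigE)
  obtain cB where evB: "eventually (\<lambda>r. norm (p r - (complex_of_real (const_a \<beta>) + complex_of_real (const_b \<beta> * (1 - r))))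
     \<le> cB * norm (complex_of_real ((1 - r)^2))) (at_left 1)"
    using hB by (auto elim: landau_o.bigE)
  have "eventually (\<lambda>r. norm (complex_of_real a' + complex_of_real (b' * (1 - r)) - (complex_of_real (const_a \<beta>) + complex_of_real (const_b \<beta> * (1 - r))))
     \<le> (cA + cB) * norm (complex_of_real ((1 - r)^2))) (at_left 1)"
    using evA evB
  proof eventually_elim
    case (elim r)
    let ?X = "p r - (complex_of_real a' + complex_of_real (b' * (1 - r)))"
    let ?Y = "p r - (complex_of_real (const_a \<beta>) + complex_of_real (const_b \<beta> * (1 - r)))"
    have eq: "complex_of_real a' + complex_of_real (b' * (1 - r)) - (complex_of_real (const_a \<beta>) + complex_of_real (const_b \<beta> * (1 - r))) = ?Y - ?X"
      by simp
    have "norm (complex_of_real a' + complex_of_real (b' * (1 - r)) - (complex_of_real (const_a \<beta>) + complex_of_real (const_b \<beta> * (1 - r))))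
        \<le> norm ?Y + norm ?X" unfolding eq by (rule norm_triangle_ineq4)
    also have "\<dots> \<le> (cA + cB) * norm (complex_of_real ((1 - r)^2))" using elim by (simp add: algebra_simps)
    finally show ?case .
  qed
  then have "(\<lambda>r. complex_of_real a' + complex_of_real (b' * (1 - r)) - (complex_of_real (const_a \<beta>) + complex_of_real (const_b \<beta> * (1 - r))))
          \<in> O[at_left 1](\<lambda>r. complex_of_real ((1 - r)^2))" by (rule bigoI)
  then show "a' = const_a \<beta> \<and> b' = const_b \<beta>" by (rule part_three)
  qed
  show ?thesis using P1 P2 P3 by blast
qed

end
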